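(* Let $\mathcal{U}\subset\Delta(\mathcal{X}\times\mathcal{Y})$ be a convex and compact uncertainty set, let $\mathrm{h}^{\mathcal{U}}\in \mathrm{T}(\mathcal{X},\mathcal{Y})$ be an $\ell$-MRC for $\mathcal{U}$, and let $\mathrm{p}^{\mathcal{U}}\in\mathcal{U}$ be a probability distribution with maximum $\ell$-entropy over $\mathcal{U}$. Then $$H_\ell(\mathcal{U})=\ell(\mathrm{h}^{\mathcal{U}},\mathrm{p}^{\mathcal{U}})=\min_{\mathrm{h}\in \mathrm{T}(\mathcal{X},\mathcal{Y})}\max_{\mathrm{p}\in\mathcal{U}}\ell(\mathrm{h},\mathrm{p});$$ that is, $\mathrm{h}^{\mathcal{U}}$ minimizes the expected $\ell$-loss with respect to $\mathrm{p}^{\mathcal{U}}$, $\mathrm{p}^{\mathcal{U}}$ maximizes the expected $\ell$-loss of $\mathrm{h}^{\mathcal{U}}$ over distributions in $\mathcal{U}$, and this expected $\ell$-loss coincides with the maximum $\ell$-entropy over $\mathcal{U}$.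
   Context: Let $\mathcal{X}$ and $\mathcal{Y}$ be finite nonempty sets, with $\mathcal{Y}=\{1,\dots,|\mathcal{Y}|\}$. For a finite set $\mathcal{Z}$, $\Delta(\mathcal{Z})$ denotes the set of probability distributions on $\mathcal{Z}$. A classification rule is a map $\mathrm{h}$ assigning to each $x\in\mathcal{X}$ a distribution $\mathrm{h}(\cdot|x)\in\Delta(\mathcal{Y})$; $\mathrm{T}(\mathcal{X},\mathcal{Y})$ is the set of all classification rules. A score function $L:\Delta(\mathcal{Y})\times\mathcal{Y}\to(-\infty,\infty]$ is lower semi-continuous and convex in its first argument; the associated classification loss is $\ell(\mathrm{h},(x,y))=L(\mathrm{h}(\cdot|x),y)$, and for $\mathrm{p}\in\Delta(\mathcal{X}\times\mathcal{Y})$ the expected loss is $\ell(\mathrm{h},\mathrm{p})=\sum_{x\in\mathcal{X},y\in\mathcal{Y}}\mathrm{p}(x,y)\ell(\mathrm{h},(x,y))$. The $\ell$-entropy of $\mathrm{p}$ is $H_\ell(\mathrm{p})=\min_{\mathrm{h}\in\mathrm{T}(\mathcal{X},\mathcal{Y})}\ell(\mathrm{h},\mathrm{p})$, and for a compact $\mathcal{U}\subset\Delta(\mathcal{X}\times\mathcal{Y})$, $H_\ell(\mathcal{U})=\max_{\mathrm{p}\in\mathcal{U}}H_\ell(\mathrm{p})$. For a convex compact $\mathcal{U}$, a rule $\mathrm{h}^{\mathcal{U}}$ is an $\ell$-MRC (minimax risk classifier) for $\mathcal{U}$ if $\mathrm{h}^{\mathcal{U}}\in\arg\min_{\mathrm{h}\in\mathrm{T}(\mathcal{X},\mathcal{Y})}\max_{\mathrm{p}\in\mathcal{U}}\ell(\mathrm{h},\mathrm{p})$.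 *)

theory Defs
  imports "HOL-Analysis.Analysis"
begin

definition Delta :: "(real ^ 'z::finite) set" where
  "Delta = {q. (\<forall>z. 0 \<le> q $ z) \<and> (\<Sum>z\<in>UNIV. q $ z) = 1}"

definition rules :: "('x::finite \<Rightarrow> real ^ 'y::finite) set" where
  "rules = {h. \<forall>x. h x \<in> Delta}"

definition score_function :: "(real ^ 'y::finite \<Rightarrow> 'y \<Rightarrow> ereal) \<Rightarrow> bool" where
  "score_function L \<longleftrightarrow>
     (\<forall>q\<in>Delta. \<forall>y. L q y \<noteq> -\<infinity>) \<and>
     (\<forall>y. \<forall>q\<in>Delta. L q y \<le> Liminf (at q within Delta) (\<lambda>r. L r y)) \<and>
     (\<forall>y. \<forall>q1\<in>Delta. \<forall>q2\<in>Delta. \<forall>t::real. 0 \<le> t \<and> t \<le> 1 \<longrightarrow>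
        L ((1 - t) *\<^sub>R q1 + t *\<^sub>R q2) y \<le> ereal (1 - t) * L q1 y + ereal t * L q2 y)"

definition exp_loss ::
  "(real ^ 'y::finite \<Rightarrow> 'y \<Rightarrow> ereal) \<Rightarrow> ('x::finite \<Rightarrow> real ^ 'y) \<Rightarrow> real ^ ('x \<times> 'y) \<Rightarrow> ereal" where
  "exp_loss L h p = (\<Sum>(x,y)\<in>UNIV. ereal (p $ (x,y)) * L (h x) y)"

definition entropy ::
  "(real ^ 'y::finite \<Rightarrow> 'y \<Rightarrow> ereal) \<Rightarrow> real ^ ('x::finite \<times> 'y) \<Rightarrow> ereal" where
  "entropy L p = (INF h\<in>(rules :: ('x \<Rightarrow> real ^ 'y) set). exp_loss L h p)"

definition entropy_set ::
  "(real ^ 'y::finite \<Rightarrow> 'y \<Rightarrow> ereal) \<Rightarrow> (real ^ ('x::finite \<times> 'y)) set \<Rightarrow> ereal" where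
  "entropy_set L U = (SUP p\<in>U. entropy L p)"

definition is_MRC ::
  "(real ^ 'y::finite \<Rightarrow> 'y \<Rightarrow> ereal) \<Rightarrow> (real ^ ('x::finite \<times> 'y)) set \<Rightarrow> ('x \<Rightarrow> real ^ 'y) \<Rightarrow> bool" where
  "is_MRC L U h \<longleftrightarrow> h \<in> rules \<and>
     (\<forall>h'\<in>rules. (SUP p\<in>U. exp_loss L h p) \<le> (SUP p\<in>U. exp_loss L h' p))"

end

theory Submission
  imports Defs
begin


lemma Delta_nonneg: "q \<in> Delta \<Longrightarrow> 0 \<le> q $ z"
  by (simp add: Delta_def)

lemma Delta_sum: "q \<in> Delta \<Longrightarrow> (\<Sum>z\<in>UNIV. q $ z) = 1"
  by (simp add: Delta_def)

lemma Delta_le1: "q \<in> Delta \<Longrightarrow> q $ z \<le> 1"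
proof -
  assume q: "q \<in> Delta"
  have "q $ z \<le> (\<Sum>z\<in>UNIV. q $ z)"
    by (rule member_le_sum) (auto simp: Delta_nonneg[OF q])
  thus ?thesis using Delta_sum[OF q] by simp
qed

lemma compact_Delta: "compact (Delta :: (real ^ 'z::finite) set)"
proof -
  have cl: "closed (Delta :: (real ^ 'z) set)"
  proof -
    have "Delta = (\<Inter>z. {q::real^'z. 0 \<le> q $ z}) \<inter> {q. (\<Sum>z\<in>UNIV. q $ z) = 1}"
      by (auto simp: Delta_def)
    moreover have "closed {q::real^'z. (\<Sum>z\<in>UNIV. q $ z) = 1}"
      by (intro closed_Collect_eq continuous_intros)
    moreover have "\<And>z. closed {q::real^'z. 0 \<le> q $ z}"
      by (intro closed_Collect_le continuous_intros)
    ultimately show ?thesis by (metis closed_INT closed_Int)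
  qed
  have bd: "bounded (Delta :: (real ^ 'z) set)"
  proof -
    have "\<forall>q\<in>(Delta :: (real ^ 'z) set). norm q \<le> real CARD('z)"
    proof
      fix q :: "real^'z" assume q: "q \<in> Delta"
      have "norm q \<le> (\<Sum>i\<in>UNIV. \<bar>q $ i\<bar>)" by (rule norm_le_l1_cart)
      also have "\<dots> \<le> (\<Sum>i\<in>(UNIV::'z set). 1)"
        by (intro sum_mono) (use q Delta_nonneg Delta_le1 in \<open>auto simp: abs_le_iff intro: order_trans[of _ 0]\<close>)
      finally show "norm q \<le> real CARD('z)" by simp
    qed
    thus ?thesis by (auto simp: bounded_iff)
  qed
  show ?thesis using cl bd by (simp add: compact_eq_bounded_closed)
qed

lemma lsc_bounded_below:
  fixes f :: "real ^ 'z::finite \<Rightarrow> ereal"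
  assumes nm: "\<forall>q\<in>Delta. f q \<noteq> -\<infinity>"
    and lsc: "\<forall>q\<in>Delta. f q \<le> Liminf (at q within Delta) f"
  shows "\<exists>B::real. \<forall>q\<in>Delta. ereal B \<le> f q"
proof -
  have "\<forall>q\<in>Delta. \<exists>c::real. \<exists>T. open T \<and> q \<in> T \<and> (\<forall>r\<in>T \<inter> Delta. ereal c < f r)"
  proof
    fix q :: "real^'z" assume q: "q \<in> Delta"
    obtain c :: real where c: "ereal c < f q"
      using nm q by (metis ereal_dense2 ereal_less(5) less_ereal.simps(5) ereal_cases)
    then have "ereal c < Liminf (at q within Delta) f" using lsc q by (meson less_le_trans)
    then have "eventually (\<lambda>r. ereal c < f r) (at q within Delta)" by (rule less_LiminfD)
    then obtain T where T: "open T" "q \<in> T" "\<forall>r\<in>T. r \<in> Delta \<longrightarrow> r \<noteq> q \<longrightarrow> ereal c < f r"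
      by (auto simp: eventually_at_topological)
    show "\<exists>c::real. \<exists>T. open T \<and> q \<in> T \<and> (\<forall>r\<in>T \<inter> Delta. ereal c < f r)"
      using T c by (intro exI[of _ c] exI[of _ T]) auto
  qed
  then obtain c T where cT: "\<And>q. q \<in> Delta \<Longrightarrow> open (T q) \<and> q \<in> T q \<and> (\<forall>r\<in>T q \<inter> Delta. ereal (c q) < f r)"
    by metis
  have cov: "Delta \<subseteq> (\<Union>q\<in>Delta. T q)" using cT by blast
  obtain K :: "(real^'z) set" where K: "K \<subseteq> Delta" "finite K" "Delta \<subseteq> (\<Union>q\<in>K. T q)"
    using compactE_image[OF compact_Delta, of Delta T] cT cov by metis
  define B where "B = Min (insert 0 (c ` K))"
  have "\<forall>q\<in>Delta. ereal B \<le> f q"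
  proof
    fix r :: "real^'z" assume r: "r \<in> Delta"
    then obtain q where q: "q \<in> K" "r \<in> T q" using K by auto
    have "B \<le> c q" unfolding B_def using K q by (intro Min_le) auto
    moreover have "ereal (c q) < f r" using cT[of q] q K r by auto
    ultimately show "ereal B \<le> f r" by (meson ereal_less_eq(3) less_imp_le order_trans)
  qed
  thus ?thesis by blast
qed



lemma exp_loss_alt:
  "exp_loss L h p = (\<Sum>xy\<in>UNIV. ereal (p $ xy) * L (h (fst xy)) (snd xy))"
  by (simp add: exp_loss_def case_prod_beta')

lemma Delta_comb:
  assumes "q1 \<in> Delta" "q2 \<in> Delta" "0 \<le> u" "0 \<le> v" "u + v = 1"
  shows "u *\<^sub>R q1 + v *\<^sub>R q2 \<in> Delta"
proof -
  have "(\<Sum>z\<in>UNIV. (u *\<^sub>R q1 + v *\<^sub>R q2) $ z) = u * (\<Sum>z\<in>UNIV. q1 $ z) + v * (\<Sum>z\<in>UNIV. q2 $ z)"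
    by (simp add: sum.distrib sum_distrib_left)
  also have "\<dots> = 1" using assms by (simp add: Delta_sum)
  finally show ?thesis using assms by (auto simp: Delta_def intro!: add_nonneg_nonneg mult_nonneg_nonneg)
qed

lemma rules_comb:
  assumes "h1 \<in> rules" "h2 \<in> rules" "0 \<le> u" "0 \<le> v" "u + v = 1"
  shows "(\<lambda>x. u *\<^sub>R h1 x + v *\<^sub>R h2 x) \<in> rules"
  using assms Delta_comb unfolding rules_def by blast

lemma ereal_comb_le:
  fixes A B :: ereal
  assumes "A \<le> ereal a" "B \<le> ereal b" "0 \<le> u" "0 \<le> v"
  shows "ereal u * A + ereal v * B \<le> ereal (u * a + v * b)"
proof -
  have "ereal u * A \<le> ereal u * ereal a" using assms by (intro ereal_mult_left_mono) auto
  moreover have "ereal v * B \<le> ereal v * ereal b" using assms by (intro ereal_mult_left_mono) auto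
  ultimately have "ereal u * A + ereal v * B \<le> ereal u * ereal a + ereal v * ereal b"
    by (rule add_mono)
  thus ?thesis by simp
qed

lemma inner_one: "q \<in> Delta \<Longrightarrow> inner q (\<chi> i. (1::real)) = 1"
  by (simp add: inner_vec_def Delta_sum)

lemma fin_ereal_eq: "x \<noteq> \<infinity> \<Longrightarrow> x \<noteq> -\<infinity> \<Longrightarrow> x = ereal (real_of_ereal x)"
  by (cases x) auto

lemma mkv:
  fixes L :: "real ^ 'y::finite \<Rightarrow> 'y \<Rightarrow> ereal" and p :: "real ^ ('x::finite \<times> 'y)"
  assumes sf: "score_function L" and h: "h \<in> rules" and fin: "exp_loss L h p < \<infinity>"
    and pos: "\<And>xy. P xy \<Longrightarrow> 0 < p $ xy" and zero: "\<And>xy. \<not> P xy \<Longrightarrow> p $ xy = 0"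
  defines "v \<equiv> (\<chi> xy. if P xy then real_of_ereal (L (h (fst xy)) (snd xy)) else 0)"
  shows "\<forall>xy. P xy \<longrightarrow> L (h (fst xy)) (snd xy) = ereal (v $ xy)"
    and "exp_loss L h p = ereal (inner p v)"
proof -
  have nm: "\<And>xy. L (h (fst xy)) (snd xy) \<noteq> -\<infinity>"
    using sf h by (auto simp: score_function_def rules_def)
  have "\<And>xy. ereal (p $ xy) * L (h (fst xy)) (snd xy) \<noteq> \<infinity>"
  proof
    fix xy assume "ereal (p $ xy) * L (h (fst xy)) (snd xy) = \<infinity>"
    then have "exp_loss L h p = \<infinity>" unfolding exp_loss_alt sum_Pinfty by (intro conjI finite_UNIV bexI[of _ xy]) auto
    then show False using fin by simp
  qed
  then have fin2: "\<And>xy. P xy \<Longrightarrow> L (h (fst xy)) (snd xy) \<noteq> \<infinity>"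
  proof -
    fix xy assume "P xy"
    then have "0 < p $ xy" by (rule pos)
    then show "L (h (fst xy)) (snd xy) \<noteq> \<infinity>" using \<open>\<And>xy. ereal (p $ xy) * L (h (fst xy)) (snd xy) \<noteq> \<infinity>\<close>[of xy] by auto
  qed
  show eq: "\<forall>xy. P xy \<longrightarrow> L (h (fst xy)) (snd xy) = ereal (v $ xy)"
    using fin2 nm fin_ereal_eq by (auto simp: v_def)
  have "exp_loss L h p = (\<Sum>xy\<in>UNIV. ereal (p $ xy * v $ xy))"
    unfolding exp_loss_alt
  proof (rule sum.cong)
    fix xy :: "'x \<times> 'y"
    show "ereal (p $ xy) * L (h (fst xy)) (snd xy) = ereal (p $ xy * v $ xy)"
      using eq zero[of xy] by (cases "P xy") (auto simp: zero_ereal_def[symmetric])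
  qed simp
  also have "\<dots> = ereal (inner p v)" by (simp add: inner_vec_def)
  finally show "exp_loss L h p = ereal (inner p v)" .
qed



lemma key:
  fixes L :: "real ^ 'y::finite \<Rightarrow> 'y \<Rightarrow> ereal"
    and U :: "(real ^ ('x::finite \<times> 'y)) set"
    and pU :: "real ^ ('x \<times> 'y)"
  assumes sf: "score_function L"
    and UD: "U \<subseteq> Delta" and cvx: "convex U" and cpt: "compact U"
    and pU: "pU \<in> U" and dc: "d < c"
    and ent: "\<forall>p\<in>U. entropy L p \<le> ereal d"
  shows "\<exists>h\<in>rules. \<forall>p\<in>U. exp_loss L h p \<le> ereal c"
proof (rule ccontr)
  assume H: "\<not> (\<exists>h\<in>rules. \<forall>p\<in>U. exp_loss L h p \<le> ereal c)"
  define S where "S = (\<lambda>xy. \<exists>p\<in>U. 0 < p $ xy)"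
  have Szero: "p $ xy = 0" if "p \<in> U" "\<not> S xy" for p xy
    using that UD Delta_nonneg[of p xy] unfolding S_def by force
  have Unn: "0 \<le> p $ xy" if "p \<in> U" for p xy using that UD Delta_nonneg by blast
  have "\<forall>y. \<exists>B::real. \<forall>q\<in>Delta. ereal B \<le> L q y"
  proof
    fix y
    show "\<exists>B::real. \<forall>q\<in>Delta. ereal B \<le> L q y"
      by (rule lsc_bounded_below) (use sf in \<open>auto simp: score_function_def\<close>)
  qed
  then obtain Bf where Bf: "\<And>y q. q \<in> Delta \<Longrightarrow> ereal (Bf y) \<le> L q y" by metis
  define B where "B = (\<Sum>y\<in>UNIV. \<bar>Bf y\<bar>)"
  have B0: "0 \<le> B" unfolding B_def by (simp add: sum_nonneg)
  have LB: "ereal (- B) \<le> L q y" if "q \<in> Delta" for q y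
  proof -
    have "\<bar>Bf y\<bar> \<le> B" unfolding B_def by (rule member_le_sum) auto
    then have "- B \<le> Bf y" by linarith
    then show ?thesis using Bf[OF that, of y] by (meson ereal_less_eq(3) order_trans)
  qed
  have "\<forall>xy. \<exists>p\<in>U. S xy \<longrightarrow> 0 < p $ xy" using pU unfolding S_def by blast
  then obtain Pf where Pf: "\<And>xy. Pf xy \<in> U" "\<And>xy. S xy \<Longrightarrow> 0 < Pf xy $ xy" by metis
  define N where "N = real CARD('x \<times> 'y)"
  have N0: "0 < N" unfolding N_def by simp
  define ps where "ps = (\<Sum>xy\<in>UNIV. (1 / N) *\<^sub>R Pf xy)"
  have psU: "ps \<in> U" unfolding ps_def
    by (rule convex_sum) (use cvx Pf N0 in \<open>auto simp: N_def\<close>)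
  have pspos: "0 < ps $ xy" if "S xy" for xy
  proof -
    have "(1 / N) * Pf xy $ xy \<le> (\<Sum>xy'\<in>UNIV. (1 / N) * Pf xy' $ xy)"
      by (rule member_le_sum) (use Unn Pf N0 in auto)
    moreover have "0 < (1 / N) * Pf xy $ xy" using Pf(2)[OF that] N0 by simp
    ultimately show ?thesis by (simp add: ps_def)
  qed
  define e where "e = (d + c) / 2"
  have de: "d < e" "e < c" using dc by (auto simp: e_def)
  have goodh: "\<exists>h\<in>rules. exp_loss L h p < ereal e" if "p \<in> U" for p
  proof -
    have "entropy L p \<le> ereal d" using ent that by blast
    moreover have "ereal d < ereal e" using de by simp
    ultimately have "entropy L p < ereal e" by (rule le_less_trans)
    thus ?thesis unfolding entropy_def by (simp add: INF_less_iff)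
  qed
  define C where "C = {v :: real^('x\<times>'y). \<exists>h\<in>rules. \<forall>xy. S xy \<longrightarrow> L (h (fst xy)) (snd xy) \<le> ereal (v $ xy)}"
  define D where "D = {v :: real^('x\<times>'y). \<forall>p\<in>U. inner p v \<le> c}"
  define one :: "real^('x\<times>'y)" where "one = (\<chi> i. (1::real))"
  have inner1: "inner p one = 1" if "p \<in> U" for p using inner_one[of p] that UD by (auto simp: one_def)
  have mk: "\<exists>v\<in>C. inner p v < e \<and> (\<forall>xy. - B \<le> v $ xy)"
    if p: "p \<in> U" and ppos: "\<And>xy. S xy \<Longrightarrow> 0 < p $ xy" for p
  proof -
    obtain h where h: "h \<in> rules" "exp_loss L h p < ereal e" using goodh[OF p] by blast
    define v :: "real^('x\<times>'y)" where "v \<equiv> (\<chi> xy. if S xy then real_of_ereal (L (h (fst xy)) (snd xy)) else 0)"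
    have fin: "exp_loss L h p < \<infinity>" using h(2) less_trans[of _ "ereal e" \<infinity>] by simp
    have v1: "\<forall>xy. S xy \<longrightarrow> L (h (fst xy)) (snd xy) = ereal (v $ xy)"
      and v2: "exp_loss L h p = ereal (inner p v)"
      using mkv[OF sf h(1) fin, of S, OF ppos Szero[OF p]] unfolding v_def by auto
    have "v \<in> C" unfolding C_def using h(1) v1 by (intro CollectI bexI[of _ h]) auto
    moreover have "inner p v < e" using h(2) v2 by simp
    moreover have "- B \<le> v $ xy" for xy
    proof (cases "S xy")
      case True
      have "h (fst xy) \<in> Delta" using h(1) by (auto simp: rules_def)
      then have "ereal (- B) \<le> ereal (v $ xy)" using LB v1 True by metis
      then show ?thesis by simp
    next
      case False then show ?thesis using B0 by (simp add: v_def)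
    qed
    ultimately show ?thesis by blast
  qed
  have Cne: "C \<noteq> {}" using mk[OF psU pspos] by blast
  have Dne: "c *\<^sub>R one \<in> D" unfolding D_def using inner1 by simp
  have CD: "C \<inter> D = {}"
  proof (rule ccontr)
    assume "C \<inter> D \<noteq> {}"
    then obtain v h where v: "h \<in> rules" "\<forall>xy. S xy \<longrightarrow> L (h (fst xy)) (snd xy) \<le> ereal (v $ xy)"
      "\<forall>p\<in>U. inner p v \<le> c" unfolding C_def D_def by blast
    have "\<forall>p\<in>U. exp_loss L h p \<le> ereal c"
    proof
      fix p assume p: "p \<in> U"
      have "exp_loss L h p \<le> (\<Sum>xy\<in>UNIV. ereal (p $ xy * v $ xy))"
        unfolding exp_loss_alt
      proof (rule sum_mono)
        fix xy :: "'x \<times> 'y"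
        show "ereal (p $ xy) * L (h (fst xy)) (snd xy) \<le> ereal (p $ xy * v $ xy)"
        proof (cases "S xy")
          case True
          then have "ereal (p $ xy) * L (h (fst xy)) (snd xy) \<le> ereal (p $ xy) * ereal (v $ xy)"
            using v(2)[rule_format, OF True] Unn[OF p, of xy] by (intro ereal_mult_left_mono) auto
          then show ?thesis by simp
        next
          case False
          then show ?thesis using Szero[OF p False] by (simp add: zero_ereal_def[symmetric])
        qed
      qed
      also have "\<dots> = ereal (inner p v)" by (simp add: inner_vec_def)
      also have "\<dots> \<le> ereal c" using v(3) p by simp
      finally show "exp_loss L h p \<le> ereal c" .
    qed
    then show False using H v(1) by blast
  qed
  have cvxC: "convex C"
  proof (rule convexI)
    fix v1 v2 :: "real^('x\<times>'y)" and u w :: real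
    assume v1: "v1 \<in> C" and v2: "v2 \<in> C" and u: "0 \<le> u" and w: "0 \<le> w" and uw: "u + w = 1"
    obtain h1 where h1: "h1 \<in> rules" "\<forall>xy. S xy \<longrightarrow> L (h1 (fst xy)) (snd xy) \<le> ereal (v1 $ xy)"
      using v1 unfolding C_def by blast
    obtain h2 where h2: "h2 \<in> rules" "\<forall>xy. S xy \<longrightarrow> L (h2 (fst xy)) (snd xy) \<le> ereal (v2 $ xy)"
      using v2 unfolding C_def by blast
    define h where "h = (\<lambda>x. u *\<^sub>R h1 x + w *\<^sub>R h2 x)"
    have hr: "h \<in> rules" unfolding h_def by (rule rules_comb[OF h1(1) h2(1) u w uw])
    have "L (h (fst xy)) (snd xy) \<le> ereal ((u *\<^sub>R v1 + w *\<^sub>R v2) $ xy)" if "S xy" for xy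
    proof -
      have d1: "h1 (fst xy) \<in> Delta" "h2 (fst xy) \<in> Delta" using h1(1) h2(1) by (auto simp: rules_def)
      have uu: "u = 1 - w" using uw by simp
      have w1: "w \<le> 1" using uw u by simp
      have "L (h (fst xy)) (snd xy) \<le> ereal (1 - w) * L (h1 (fst xy)) (snd xy) + ereal w * L (h2 (fst xy)) (snd xy)"
        using sf d1 w w1 unfolding score_function_def h_def uu by blast
      also have "\<dots> \<le> ereal ((1 - w) * v1 $ xy + w * v2 $ xy)"
        by (rule ereal_comb_le) (use h1(2)[rule_format, OF that] h2(2)[rule_format, OF that] w w1 in auto)
      finally show ?thesis by (simp add: uu)
    qed
    then show "u *\<^sub>R v1 + w *\<^sub>R v2 \<in> C" unfolding C_def using hr by blast
  qed
  have cvxD: "convex D"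
  proof (rule convexI)
    fix v1 v2 :: "real^('x\<times>'y)" and u w :: real
    assume v1: "v1 \<in> D" and v2: "v2 \<in> D" and u: "0 \<le> u" and w: "0 \<le> w" and uw: "u + w = 1"
    show "u *\<^sub>R v1 + w *\<^sub>R v2 \<in> D" unfolding D_def
    proof (intro CollectI ballI)
      fix p assume p: "p \<in> U"
      have "u * inner p v1 \<le> u * c" using v1 p u unfolding D_def by (simp add: mult_left_mono)
      moreover have "w * inner p v2 \<le> w * c" using v2 p w unfolding D_def by (simp add: mult_left_mono)
      ultimately have "inner p (u *\<^sub>R v1 + w *\<^sub>R v2) \<le> (u + w) * c"
        by (simp add: inner_add_right distrib_right)
      then show "inner p (u *\<^sub>R v1 + w *\<^sub>R v2) \<le> c" using uw by simp
    qed
  qed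
  have "\<exists>a b. a \<noteq> 0 \<and> (\<forall>x\<in>D. inner a x \<le> b) \<and> (\<forall>x\<in>C. inner a x \<ge> b)"
  proof (rule separating_hyperplane_sets[OF cvxD cvxC])
    show "D \<noteq> {}" using Dne by blast
    show "C \<noteq> {}" by (rule Cne)
    show "D \<inter> C = {}" using CD by blast
  qed
  then obtain a b where ab: "a \<noteq> 0" "\<forall>x\<in>D. inner a x \<le> b" "\<forall>x\<in>C. b \<le> inner a x"
    by blast
  have innerD: "inner p (x *\<^sub>R one) = x" if "p \<in> U" for p x using inner1[OF that] by simp
  have anonneg: "0 \<le> a $ k" for k
  proof (rule ccontr)
    assume "\<not> 0 \<le> a $ k"
    then have ak: "a $ k < 0" by simp
    define t where "t = (\<bar>b\<bar> + \<bar>c * inner a one\<bar> + 1) / (- a $ k)"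
    have t0: "0 \<le> t" unfolding t_def using ak by (intro divide_nonneg_pos) auto
    have tak: "- t * a $ k = \<bar>b\<bar> + \<bar>c * inner a one\<bar> + 1" unfolding t_def using ak by (simp add: field_simps)
    define v where "v = c *\<^sub>R one - t *\<^sub>R axis k 1"
    have "v \<in> D" unfolding D_def
    proof (intro CollectI ballI)
      fix p assume p: "p \<in> U"
      have "inner p v = c - t * p $ k" unfolding v_def using inner1[OF p]
        by (simp add: inner_diff_right inner_axis)
      also have "\<dots> \<le> c" using t0 Unn[OF p, of k] by simp
      finally show "inner p v \<le> c" .
    qed
    then have "inner a v \<le> b" using ab(2) by blast
    moreover have "inner a v = c * inner a one - t * a $ k" unfolding v_def
      by (simp add: inner_diff_right inner_axis)
    ultimately show False using tak by linarith
  qed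
  define s where "s = (\<Sum>i\<in>UNIV. a $ i)"
  have s0: "0 < s"
  proof -
    obtain k where "a $ k \<noteq> 0" using ab(1) by (metis vec_eq_iff zero_index)
    then have "0 < a $ k" using anonneg[of k] by simp
    moreover have "a $ k \<le> s" unfolding s_def by (rule member_le_sum) (use anonneg in auto)
    ultimately show ?thesis by simp
  qed
  have aone: "inner a one = s" by (simp add: inner_vec_def one_def s_def)
  define q where "q = (1 / s) *\<^sub>R a"
  have aq: "a = s *\<^sub>R q" unfolding q_def using s0 by simp
  have qU: "q \<in> U"
  proof (rule ccontr)
    assume nq: "q \<notin> U"
    obtain w \<beta> where wb: "inner w q < \<beta>" "\<forall>x\<in>U. \<beta> < inner w x"
      using separating_hyperplane_closed_point[OF cvx compact_imp_closed[OF cpt] nq] by blast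
    define \<delta> where "\<delta> = \<beta> * s - inner a w"
    have aw: "inner a w = s * inner w q" unfolding aq by (simp add: inner_commute)
    have \<delta>0: "0 < \<delta>" unfolding \<delta>_def aw using wb(1) s0 by (simp add: algebra_simps)
    define t where "t = (\<bar>b\<bar> + \<bar>c * s\<bar> + 1) / \<delta>"
    have t0: "0 \<le> t" unfolding t_def using \<delta>0 by (intro divide_nonneg_pos) auto
    have td: "t * \<delta> = \<bar>b\<bar> + \<bar>c * s\<bar> + 1" unfolding t_def using \<delta>0 by simp
    define v where "v = c *\<^sub>R one + t *\<^sub>R (\<beta> *\<^sub>R one - w)"
    have "v \<in> D" unfolding D_def
    proof (intro CollectI ballI)
      fix p assume p: "p \<in> U"
      have "inner p v = c + t * (\<beta> - inner p w)" unfolding v_def using inner1[OF p]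
        by (simp add: inner_add_right inner_diff_right algebra_simps)
      also have "\<dots> \<le> c"
      proof -
        have "\<beta> - inner p w \<le> 0" using wb(2) p inner_commute[of w p] by fastforce
        then show ?thesis using t0 by (simp add: mult_nonneg_nonpos)
      qed
      finally show "inner p v \<le> c" .
    qed
    then have "inner a v \<le> b" using ab(2) by blast
    moreover have "inner a v = c * s + t * \<delta>" unfolding v_def \<delta>_def using aone
      by (simp add: inner_add_right inner_diff_right algebra_simps)
    ultimately show False using td by linarith
  qed
  have qC: "c \<le> inner q v" if "v \<in> C" for v
  proof -
    have "inner a (c *\<^sub>R one) \<le> b" using ab(2) Dne by blast
    then have "c * s \<le> b" using aone by simp
    also have "b \<le> inner a v" using ab(3) that by blast
    also have "\<dots> = s * inner q v" unfolding aq by simp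
    finally show ?thesis using s0 by (simp add: mult.commute)
  qed
  define K where "K = \<bar>c\<bar> + B + 1"
  have K0: "0 < K" using B0 unfolding K_def by simp
  define \<epsilon> where "\<epsilon> = (c - e) / (K + (c - e))"
  have eps0: "0 < \<epsilon>" "\<epsilon> \<le> 1" using de K0 unfolding \<epsilon>_def by auto
  have epsK: "\<epsilon> * (c + B) \<le> c - e"
  proof -
    have "\<epsilon> * (c + B) \<le> \<epsilon> * K" using eps0 unfolding K_def by (intro mult_left_mono) auto
    also have "\<epsilon> * K \<le> c - e" unfolding \<epsilon>_def using de K0 sum_squares_ge_zero[of "c - e" 0]
      by (simp add: field_simps power2_eq_square)
    finally show ?thesis .
  qed
  define qe where "qe = (1 - \<epsilon>) *\<^sub>R q + \<epsilon> *\<^sub>R ps"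
  have qeU: "qe \<in> U" unfolding qe_def by (rule convexD[OF cvx qU psU]) (use eps0 in auto)
  have qepos: "0 < qe $ xy" if "S xy" for xy
  proof -
    have "0 \<le> (1 - \<epsilon>) * q $ xy" using eps0 Unn[OF qU] by simp
    moreover have "0 < \<epsilon> * ps $ xy" using eps0 pspos[OF that] by simp
    ultimately show ?thesis unfolding qe_def by simp
  qed
  obtain v where v: "v \<in> C" "inner qe v < e" "\<forall>xy. - B \<le> v $ xy" using mk[OF qeU qepos] by blast
  have iq: "c \<le> inner q v" using qC[OF v(1)] .
  have ips: "- B \<le> inner ps v"
  proof -
    have "(\<Sum>i\<in>UNIV. ps $ i * (- B)) \<le> (\<Sum>i\<in>UNIV. ps $ i * v $ i)"
      by (intro sum_mono mult_left_mono) (use v(3) Unn[OF psU] in auto)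
    moreover have "(\<Sum>i\<in>UNIV. ps $ i * (- B)) = - B"
    proof -
      have "(\<Sum>i\<in>UNIV. ps $ i * (- B)) = (\<Sum>i\<in>UNIV. ps $ i) * (- B)" by (rule sum_distrib_right[symmetric])
      also have "\<dots> = - B" using Delta_sum[of ps] psU UD by auto
      finally show ?thesis .
    qed
    ultimately show ?thesis by (simp add: inner_vec_def)
  qed
  have "inner qe v = (1 - \<epsilon>) * inner q v + \<epsilon> * inner ps v"
    unfolding qe_def by (simp add: inner_add_left)
  moreover have "(1 - \<epsilon>) * c \<le> (1 - \<epsilon>) * inner q v" using iq eps0 by (intro mult_left_mono) auto
  moreover have "\<epsilon> * (- B) \<le> \<epsilon> * inner ps v" using ips eps0 by (intro mult_left_mono) auto
  ultimately have "c - \<epsilon> * (c + B) \<le> inner qe v" by (simp add: algebra_simps)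
  then show False using v(2) epsK by linarith
qed


theorem theorem1:
  fixes L :: "real ^ 'y::finite \<Rightarrow> 'y \<Rightarrow> ereal"
    and U :: "(real ^ ('x::finite \<times> 'y)) set"
    and hU :: "'x \<Rightarrow> real ^ 'y"
    and pU :: "real ^ ('x \<times> 'y)"
  assumes "score_function L"
    and "U \<subseteq> Delta" and "convex U" and "compact U"
    and "is_MRC L U hU"
    and "pU \<in> U" and "\<forall>p\<in>U. entropy L p \<le> entropy L pU"
  shows "entropy_set L U = exp_loss L hU pU
    \<and> exp_loss L hU pU = (INF h\<in>rules. SUP p\<in>U. exp_loss L h p)
    \<and> (\<forall>h\<in>rules. exp_loss L hU pU \<le> exp_loss L h pU)
    \<and> (\<forall>p\<in>U. exp_loss L hU p \<le> exp_loss L hU pU)"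
proof -
  note sf = assms(1) and UD = assms(2) and cvx = assms(3) and cpt = assms(4)
    and mrc = assms(5) and pU = assms(6) and mx = assms(7)
  define V where "V = (SUP p\<in>U. exp_loss L hU p)"
  define W where "W = entropy_set L U"
  have hU: "hU \<in> rules" and hmin: "\<forall>h'\<in>rules. V \<le> (SUP p\<in>U. exp_loss L h' p)"
    using mrc unfolding is_MRC_def V_def by auto
  have WpU: "W = entropy L pU"
    unfolding W_def entropy_set_def
    by (rule antisym) (use mx pU in \<open>auto intro: SUP_least SUP_upper\<close>)
  have entW: "entropy L p \<le> W" if "p \<in> U" for p
    unfolding W_def entropy_set_def using that by (rule SUP_upper)
  have VW: "V \<le> W"
  proof (rule dense_ge)
    fix y assume "W < y"
    then obtain d where d: "W < ereal d" "ereal d < y" using ereal_dense2 by blast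
    then obtain c where c: "ereal d < ereal c" "ereal c < y" using ereal_dense2 by blast
    have ed: "\<forall>p\<in>U. entropy L p \<le> ereal d" using entW d(1) by (meson less_imp_le order_trans)
    have dc: "d < c" using c(1) by simp
    obtain h where h: "h \<in> rules" "\<forall>p\<in>U. exp_loss L h p \<le> ereal c"
      using key[OF sf UD cvx cpt pU dc ed] by blast
    have "V \<le> (SUP p\<in>U. exp_loss L h p)" using hmin h(1) by blast
    also have "\<dots> \<le> ereal c" using h(2) by (intro SUP_least) auto
    finally show "V \<le> y" using c(2) by simp
  qed
  have e1: "W \<le> exp_loss L hU pU" unfolding WpU entropy_def using hU by (rule INF_lower)
  have e2: "exp_loss L hU pU \<le> V" unfolding V_def using pU by (rule SUP_upper)
  have eqW: "exp_loss L hU pU = W" and eqV: "V = W" using e1 e2 VW by auto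
  have INFV: "(INF h\<in>rules. SUP p\<in>U. exp_loss L h p) = V"
  proof (rule antisym)
    show "(INF h\<in>rules. SUP p\<in>U. exp_loss L h p) \<le> V" unfolding V_def using hU by (rule INF_lower)
    show "V \<le> (INF h\<in>rules. SUP p\<in>U. exp_loss L h p)" using hmin by (intro INF_greatest) auto
  qed
  have c3: "\<forall>h\<in>rules. exp_loss L hU pU \<le> exp_loss L h pU"
  proof
    fix h :: "'x \<Rightarrow> real^'y" assume "h \<in> rules"
    then have "entropy L pU \<le> exp_loss L h pU" unfolding entropy_def by (rule INF_lower)
    then show "exp_loss L hU pU \<le> exp_loss L h pU" using eqW WpU by simp
  qed
  have c4: "\<forall>p\<in>U. exp_loss L hU p \<le> exp_loss L hU pU"
  proof
    fix p assume "p \<in> U"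
    then have "exp_loss L hU p \<le> V" unfolding V_def by (rule SUP_upper)
    then show "exp_loss L hU p \<le> exp_loss L hU pU" using eqW eqV by simp
  qed
  show ?thesis using eqW eqV INFV c3 c4 unfolding W_def by simp
qed

end
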